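(* Let $R$ be a ring with identity, let ${}_RM$ be a semisimple left $R$-module and let $\varphi:M\to M$ be a nonzero nilpotent $R$-endomorphism. Then the following are equivalent: (1) there is a nilpotent Jordan normal base $\{x_i\mid 1\le i\le n\}$ of ${}_RM$ with respect to $\varphi$ consisting of one block (i.e. $x_{i+1}=\varphi(x_i)$ for $1\le i<n$ and $\varphi(x_n)=0$); (2) $\varphi$ is an indecomposable nilpotent element of the ring $\mathrm{Hom}_R(M,M)$; (3) ${}_RM$ is finitely generated and $\varphi^{d-1}\neq0$, where $d=\dim_R(M)$ is the composition length of ${}_RM$.
   Context: For an $R$-endomorphism $\varphi$ of a left $R$-module ${}_RM$, a subset $\{x_{\gamma,i}\mid\gamma\in\Gamma,1\le i\le k_\gamma\}\subseteq M$ (with integers $k_\gamma\ge1$) is a nilpotent Jordan normal base of ${}_RM$ with respect to $\varphi$ if each submodule $Rx_{\gamma,i}$ is simple, $M=\bigoplus_{\gamma,i}Rx_{\gamma,i}$ is a direct sum, $\varphi(x_{\gamma,i})=x_{\gamma,i+1}$ for $1\le i<k_\gamma$, $\varphi(x_{\gamma,k_\gamma})=0$, and $\{k_\gamma\mid\gamma\in\Gamma\}$ is bounded; $\Gamma$ is the set of blocks. A nilpotent element $s$ of a ring $S$ is decomposable if $es=se$ for some idempotent $e\in S$ with $0\ne e\ne1$; a nilpotent element which is not decomposable is indecomposable. *)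

theory Defs
  imports "HOL-Algebra.Ring"
begin

definition lmodule :: "('r::ring_1 \<Rightarrow> 'm::ab_group_add \<Rightarrow> 'm) \<Rightarrow> bool" where
  "lmodule s \<longleftrightarrow>
     (\<forall>a b x. s (a + b) x = s a x + s b x) \<and>
     (\<forall>a x y. s a (x + y) = s a x + s a y) \<and>
     (\<forall>a b x. s (a * b) x = s a (s b x)) \<and>
     (\<forall>x. s 1 x = x)"

definition submodule :: "('r \<Rightarrow> 'm::ab_group_add \<Rightarrow> 'm) \<Rightarrow> 'm set \<Rightarrow> bool" where
  "submodule s N \<longleftrightarrow> 0 \<in> N \<and> (\<forall>x\<in>N. \<forall>y\<in>N. x + y \<in> N) \<and> (\<forall>r. \<forall>x\<in>N. s r x \<in> N)"

definition gen :: "('r \<Rightarrow> 'm::ab_group_add \<Rightarrow> 'm) \<Rightarrow> 'm set \<Rightarrow> 'm set" where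
  "gen s S = \<Inter>{N. submodule s N \<and> S \<subseteq> N}"

definition cyc :: "('r \<Rightarrow> 'm \<Rightarrow> 'm) \<Rightarrow> 'm \<Rightarrow> 'm set" where
  "cyc s x = range (\<lambda>r. s r x)"

definition simple_sub :: "('r \<Rightarrow> 'm::ab_group_add \<Rightarrow> 'm) \<Rightarrow> 'm set \<Rightarrow> bool" where
  "simple_sub s N \<longleftrightarrow> submodule s N \<and> N \<noteq> {0} \<and>
     (\<forall>K. submodule s K \<and> K \<subseteq> N \<longrightarrow> K = {0} \<or> K = N)"

definition semisimple :: "('r \<Rightarrow> 'm::ab_group_add \<Rightarrow> 'm) \<Rightarrow> bool" where
  "semisimple s \<longleftrightarrow> gen s (\<Union>{N. simple_sub s N}) = UNIV"

definition finitely_generated :: "('r \<Rightarrow> 'm::ab_group_add \<Rightarrow> 'm) \<Rightarrow> bool" where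
  "finitely_generated s \<longleftrightarrow> (\<exists>F. finite F \<and> gen s F = UNIV)"

definition direct_sum :: "('r \<Rightarrow> 'm::ab_group_add \<Rightarrow> 'm) \<Rightarrow> ('j \<Rightarrow> 'm set) \<Rightarrow> 'j set \<Rightarrow> bool" where
  "direct_sum s N J \<longleftrightarrow>
     (\<forall>j\<in>J. submodule s (N j)) \<and>
     gen s (\<Union>j\<in>J. N j) = UNIV \<and>
     (\<forall>F f. finite F \<and> F \<subseteq> J \<and> (\<forall>j\<in>F. f j \<in> N j) \<and> sum f F = 0 \<longrightarrow> (\<forall>j\<in>F. f j = 0))"

definition comp_series :: "('r \<Rightarrow> 'm::ab_group_add \<Rightarrow> 'm) \<Rightarrow> nat \<Rightarrow> bool" where
  "comp_series s d \<longleftrightarrow> (\<exists>c :: nat \<Rightarrow> 'm set.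
      c 0 = {0} \<and> c d = UNIV \<and> (\<forall>i\<le>d. submodule s (c i)) \<and>
      (\<forall>i<d. c i \<subset> c (Suc i) \<and>
              \<not> (\<exists>N. submodule s N \<and> c i \<subset> N \<and> N \<subset> c (Suc i))))"

definition comp_length :: "('r \<Rightarrow> 'm::ab_group_add \<Rightarrow> 'm) \<Rightarrow> nat" where
  "comp_length s = (LEAST d. comp_series s d)"

definition is_hom :: "('r \<Rightarrow> 'm::ab_group_add \<Rightarrow> 'm) \<Rightarrow> ('m \<Rightarrow> 'm) \<Rightarrow> bool" where
  "is_hom s f \<longleftrightarrow> (\<forall>x y. f (x + y) = f x + f y) \<and> (\<forall>r x. f (s r x) = s r (f x))"

definition End_ring :: "('r \<Rightarrow> 'm::ab_group_add \<Rightarrow> 'm) \<Rightarrow> ('m \<Rightarrow> 'm) ring" where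
  "End_ring s = \<lparr>carrier = {f. is_hom s f}, mult = (\<circ>), one = id,
                 zero = (\<lambda>_. 0), add = (\<lambda>f g x. f x + g x)\<rparr>"

definition nilpotent_elem :: "('a, 'b) ring_scheme \<Rightarrow> 'a \<Rightarrow> bool" where
  "nilpotent_elem S x \<longleftrightarrow> x \<in> carrier S \<and> (\<exists>n::nat. x [^]\<^bsub>S\<^esub> n = \<zero>\<^bsub>S\<^esub>)"

definition decomposable_nilpotent :: "('a, 'b) ring_scheme \<Rightarrow> 'a \<Rightarrow> bool" where
  "decomposable_nilpotent S x \<longleftrightarrow> nilpotent_elem S x \<and>
     (\<exists>e\<in>carrier S. e \<otimes>\<^bsub>S\<^esub> e = e \<and> e \<noteq> \<zero>\<^bsub>S\<^esub> \<and> e \<noteq> \<one>\<^bsub>S\<^esub> \<and>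
        e \<otimes>\<^bsub>S\<^esub> x = x \<otimes>\<^bsub>S\<^esub> e)"

definition indecomposable_nilpotent :: "('a, 'b) ring_scheme \<Rightarrow> 'a \<Rightarrow> bool" where
  "indecomposable_nilpotent S x \<longleftrightarrow> nilpotent_elem S x \<and> \<not> decomposable_nilpotent S x"

text \<open>Nilpotent Jordan normal base: blocks Gamma, block sizes k, elements x gamma i (1 <= i <= k gamma).\<close>
definition nilpotent_jordan_base ::
  "('r \<Rightarrow> 'm::ab_group_add \<Rightarrow> 'm) \<Rightarrow> ('m \<Rightarrow> 'm) \<Rightarrow> 'g set \<Rightarrow> ('g \<Rightarrow> nat) \<Rightarrow> ('g \<Rightarrow> nat \<Rightarrow> 'm) \<Rightarrow> bool" where
  "nilpotent_jordan_base s \<phi> \<Gamma> k x \<longleftrightarrow>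
     (\<forall>\<gamma>\<in>\<Gamma>. 1 \<le> k \<gamma>) \<and>
     (\<forall>\<gamma>\<in>\<Gamma>. \<forall>i\<in>{1..k \<gamma>}. simple_sub s (cyc s (x \<gamma> i))) \<and>
     direct_sum s (\<lambda>(\<gamma>, i). cyc s (x \<gamma> i)) (SIGMA \<gamma>:\<Gamma>. {1..k \<gamma>}) \<and>
     (\<forall>\<gamma>\<in>\<Gamma>. \<forall>i. 1 \<le> i \<and> i < k \<gamma> \<longrightarrow> \<phi> (x \<gamma> i) = x \<gamma> (Suc i)) \<and>
     (\<forall>\<gamma>\<in>\<Gamma>. \<phi> (x \<gamma> (k \<gamma>)) = 0) \<and>
     bdd_above (k ` \<Gamma>)"

end

theory Submission
  imports Defs
begin



lemma nat_pow_End: "(f::'m::ab_group_add\<Rightarrow>'m) [^]\<^bsub>End_ring s\<^esub> (n::nat) = f ^^ n"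
  by (induct n) (simp_all add: nat_pow_def End_ring_def funpow_swap1 comp_def)

locale lmod =
  fixes s :: "'r::ring_1 \<Rightarrow> 'm::ab_group_add \<Rightarrow> 'm"
  assumes lm: "lmodule s"
begin

lemma s_add_r: "s (a + b) x = s a x + s b x" using lm by (simp add: lmodule_def)
lemma s_add: "s a (x + y) = s a x + s a y" using lm by (simp add: lmodule_def)
lemma s_mult: "s (a * b) x = s a (s b x)" using lm by (simp add: lmodule_def)
lemma s_one[simp]: "s 1 x = x" using lm by (simp add: lmodule_def)
lemma s_zero_r[simp]: "s 0 x = 0" using s_add_r[of 0 0 x] by simp
lemma s_zero[simp]: "s a 0 = 0" using s_add[of a 0 0] by simp
lemma s_uminus: "s a (- x) = - s a x"
proof -
  have "s a x + s a (- x) = 0" using s_add[of a x "-x"] by simp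
  then show ?thesis by (metis add.commute eq_neg_iff_add_eq_0)
qed
lemma s_diff: "s a (x - y) = s a x - s a y"
  by (metis diff_conv_add_uminus s_add s_uminus)
lemma s_neg1: "s (-1) x = - x"
proof -
  have "s 1 x + s (-1) x = 0" using s_add_r[of 1 "-1" x] by simp
  then show ?thesis by (metis s_one add.commute eq_neg_iff_add_eq_0)
qed

lemma sub0: "submodule s N \<Longrightarrow> 0 \<in> N" by (simp add: submodule_def)
lemma subadd: "submodule s N \<Longrightarrow> x \<in> N \<Longrightarrow> y \<in> N \<Longrightarrow> x + y \<in> N" by (simp add: submodule_def)
lemma subsc: "submodule s N \<Longrightarrow> x \<in> N \<Longrightarrow> s r x \<in> N" by (simp add: submodule_def)
lemma subneg: "submodule s N \<Longrightarrow> x \<in> N \<Longrightarrow> - x \<in> N"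
  using subsc[of N x "-1"] by (simp add: s_neg1)
lemma subdiff: "submodule s N \<Longrightarrow> x \<in> N \<Longrightarrow> y \<in> N \<Longrightarrow> x - y \<in> N"
  by (metis diff_conv_add_uminus subadd subneg)
lemma subsum: "submodule s N \<Longrightarrow> (\<And>i. i \<in> F \<Longrightarrow> f i \<in> N) \<Longrightarrow> sum f F \<in> N"
  by (induct F rule: infinite_finite_induct) (auto simp: sub0 subadd)

lemma sub_UNIV: "submodule s UNIV" by (simp add: submodule_def)
lemma sub_zero: "submodule s {0}" by (simp add: submodule_def)
lemma sub_Int: "submodule s A \<Longrightarrow> submodule s B \<Longrightarrow> submodule s (A \<inter> B)"
  by (simp add: submodule_def)

lemma gen_sub: "submodule s (gen s S)" by (auto simp: gen_def submodule_def)
lemma gen_sup: "S \<subseteq> gen s S" by (auto simp: gen_def)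
lemma gen_least: "submodule s N \<Longrightarrow> S \<subseteq> N \<Longrightarrow> gen s S \<subseteq> N" by (auto simp: gen_def)

lemma cyc_sub: "submodule s (cyc s x)"
  unfolding submodule_def cyc_def
  by (auto simp: s_add_r[symmetric] s_mult[symmetric] intro!: range_eqI[of _ _ 0])
lemma cyc_self: "x \<in> cyc s x" unfolding cyc_def using s_one by (metis rangeI)
lemma cyc_least: "submodule s N \<Longrightarrow> x \<in> N \<Longrightarrow> cyc s x \<subseteq> N"
  by (auto simp: cyc_def subsc)
lemma cyc0: "cyc s 0 = {0}" by (auto simp: cyc_def)

lemma simple_cyc_eq: "simple_sub s S \<Longrightarrow> v \<in> S \<Longrightarrow> v \<noteq> 0 \<Longrightarrow> cyc s v = S"
  unfolding simple_sub_def using cyc_sub cyc_least cyc_self by blast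

lemma simple_cycI: "z \<noteq> 0 \<Longrightarrow> (\<And>w. w \<in> cyc s z \<Longrightarrow> w \<noteq> 0 \<Longrightarrow> z \<in> cyc s w) \<Longrightarrow> simple_sub s (cyc s z)"
  unfolding simple_sub_def
proof (intro conjI allI impI)
  assume z: "z \<noteq> 0"
  show "submodule s (cyc s z)" by (rule cyc_sub)
  show "cyc s z \<noteq> {0}" using cyc_self[of z] z by auto
  fix K assume K: "submodule s K \<and> K \<subseteq> cyc s z"
     and h: "\<And>w. w \<in> cyc s z \<Longrightarrow> w \<noteq> 0 \<Longrightarrow> z \<in> cyc s w"
  show "K = {0} \<or> K = cyc s z"
  proof (cases "K = {0}")
    case False
    then obtain w where w: "w \<in> K" "w \<noteq> 0" using K sub0 by blast
    then have "z \<in> cyc s w" using h K by blast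
    then have "z \<in> K" using cyc_least[of K w] K w by blast
    then show ?thesis using cyc_least[of K z] K by blast
  qed simp
qed

definition padd :: "'m set \<Rightarrow> 'm set \<Rightarrow> 'm set" where
  "padd A B = {a + b | a b. a \<in> A \<and> b \<in> B}"

lemma padd_sub: "submodule s A \<Longrightarrow> submodule s B \<Longrightarrow> submodule s (padd A B)"
  unfolding submodule_def padd_def
proof (intro conjI ballI allI)
  assume A: "0 \<in> A \<and> (\<forall>x\<in>A. \<forall>y\<in>A. x + y \<in> A) \<and> (\<forall>r. \<forall>x\<in>A. s r x \<in> A)"
     and B: "0 \<in> B \<and> (\<forall>x\<in>B. \<forall>y\<in>B. x + y \<in> B) \<and> (\<forall>r. \<forall>x\<in>B. s r x \<in> B)"
  show "0 \<in> {a + b |a b. a \<in> A \<and> b \<in> B}" using A B by force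
  fix x y assume "x \<in> {a + b |a b. a \<in> A \<and> b \<in> B}" "y \<in> {a + b |a b. a \<in> A \<and> b \<in> B}"
  then obtain a b a' b' where "x = a + b" "y = a' + b'" "a \<in> A" "b \<in> B" "a' \<in> A" "b' \<in> B" by auto
  moreover have "a + b + (a' + b') = (a + a') + (b + b')" by (simp add: algebra_simps)
  ultimately show "x + y \<in> {a + b |a b. a \<in> A \<and> b \<in> B}" using A B by blast
next
  fix r x
  assume A: "0 \<in> A \<and> (\<forall>x\<in>A. \<forall>y\<in>A. x + y \<in> A) \<and> (\<forall>r. \<forall>x\<in>A. s r x \<in> A)"
     and B: "0 \<in> B \<and> (\<forall>x\<in>B. \<forall>y\<in>B. x + y \<in> B) \<and> (\<forall>r. \<forall>x\<in>B. s r x \<in> B)"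
     and "x \<in> {a + b |a b. a \<in> A \<and> b \<in> B}"
  then obtain a b where "x = a + b" "a \<in> A" "b \<in> B" by auto
  then show "s r x \<in> {a + b |a b. a \<in> A \<and> b \<in> B}" using A B s_add by blast
qed

lemma padd_l: "submodule s B \<Longrightarrow> A \<subseteq> padd A B"
  unfolding padd_def using sub0 by force
lemma padd_r: "submodule s A \<Longrightarrow> B \<subseteq> padd A B"
  unfolding padd_def using sub0 by force

lemma hom_0: "is_hom s f \<Longrightarrow> f 0 = 0"
  unfolding is_hom_def by (metis add_0 add_cancel_right_right)
lemma hom_add: "is_hom s f \<Longrightarrow> f (x + y) = f x + f y" by (simp add: is_hom_def)
lemma hom_sc: "is_hom s f \<Longrightarrow> f (s r x) = s r (f x)" by (simp add: is_hom_def)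
lemma hom_neg: "is_hom s f \<Longrightarrow> f (- x) = - f x"
proof -
  assume h: "is_hom s f"
  have "f x + f (- x) = 0" using hom_add[OF h, of x "-x"] hom_0[OF h] by simp
  then show ?thesis by (metis add.commute eq_neg_iff_add_eq_0)
qed
lemma hom_diff: "is_hom s f \<Longrightarrow> f (x - y) = f x - f y"
  by (metis diff_conv_add_uminus hom_add hom_neg)
lemma hom_sum: "is_hom s f \<Longrightarrow> f (sum g F) = (\<Sum>i\<in>F. f (g i))"
  by (induct F rule: infinite_finite_induct) (auto simp: hom_0 hom_add)
lemma hom_funpow: "is_hom s f \<Longrightarrow> is_hom s (f ^^ n)"
  by (induct n) (auto simp: is_hom_def)
lemma hom_comp: "is_hom s f \<Longrightarrow> is_hom s g \<Longrightarrow> is_hom s (f \<circ> g)"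
  by (auto simp: is_hom_def)
lemma ker_sub: "is_hom s f \<Longrightarrow> submodule s {x. f x = 0}"
  by (auto simp: submodule_def hom_0 hom_add hom_sc)

end



context lmod begin

fun sumset :: "'m set list \<Rightarrow> 'm set" where
  "sumset [] = {0}"
| "sumset (S # L) = padd S (sumset L)"

lemma sumset_sub: "(\<forall>S\<in>set L. submodule s S) \<Longrightarrow> submodule s (sumset L)"
  by (induct L) (auto simp: sub_zero padd_sub)

lemma sumset_mem: "(\<forall>S\<in>set L. submodule s S) \<Longrightarrow> S \<in> set L \<Longrightarrow> v \<in> S \<Longrightarrow> v \<in> sumset L"
proof (induct L)
  case (Cons T L)
  show ?case
  proof (cases "S = T")
    case True then show ?thesis using Cons padd_l[of "sumset L" T] sumset_sub[of L] by auto
  next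
    case False then show ?thesis using Cons padd_r[of T "sumset L"] by auto
  qed
qed simp

lemma sumset_append: "(\<forall>S\<in>set L1. submodule s S) \<Longrightarrow> (\<forall>S\<in>set L2. submodule s S) \<Longrightarrow>
   v \<in> sumset L1 \<Longrightarrow> w \<in> sumset L2 \<Longrightarrow> v + w \<in> sumset (L1 @ L2)"
proof (induct L1 arbitrary: v)
  case (Cons S L1)
  then obtain a b where ab: "v = a + b" "a \<in> S" "b \<in> sumset L1" by (auto simp: padd_def)
  then have "b + w \<in> sumset (L1 @ L2)" using Cons by auto
  then show ?case using ab by (auto simp: padd_def add.assoc)
qed simp

definition comp_in :: "'m set \<Rightarrow> nat \<Rightarrow> (nat \<Rightarrow> 'm set) \<Rightarrow> bool" where
  "comp_in U d c \<longleftrightarrow> c 0 = {0} \<and> c d = U \<and> (\<forall>i\<le>d. submodule s (c i)) \<and>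
      (\<forall>i<d. c i \<subset> c (Suc i) \<and>
              \<not> (\<exists>N. submodule s N \<and> c i \<subset> N \<and> N \<subset> c (Suc i)))"

lemma comp_series_iff: "comp_series s d \<longleftrightarrow> (\<exists>c. comp_in UNIV d c)"
  by (simp add: comp_series_def comp_in_def)

lemma comp_exists: "(\<forall>S\<in>set L. simple_sub s S) \<Longrightarrow> \<exists>d c. d \<le> length L \<and> comp_in (sumset L) d c"
proof (induct L)
  case Nil
  show ?case by (rule exI[of _ 0], rule exI[of _ "\<lambda>_. {0}"]) (simp add: comp_in_def sub_zero)
next
  case (Cons S L)
  then obtain d c where dc: "d \<le> length L" "comp_in (sumset L) d c" by auto
  let ?U = "sumset L"
  have subs: "\<forall>S\<in>set L. submodule s S" using Cons.prems by (simp add: simple_sub_def)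
  have Us: "submodule s ?U" using sumset_sub[OF subs] .
  have S: "simple_sub s S" using Cons.prems by simp
  have Ss: "submodule s S" using S by (simp add: simple_sub_def)
  show ?case
  proof (cases "S \<subseteq> ?U")
    case True
    have "padd S ?U = ?U"
      using True padd_r[OF Ss, of ?U] subadd[OF Us] by (auto simp: padd_def)
    then show ?thesis using dc by (intro exI[of _ d] exI[of _ c]) auto
  next
    case False
    have SU: "S \<inter> ?U = {0}"
      using S False sub_Int[OF Ss Us] unfolding simple_sub_def by blast
    let ?U' = "padd S ?U"
    have U's: "submodule s ?U'" using padd_sub[OF Ss Us] .
    have strict: "?U \<subset> ?U'"
    proof -
      obtain a where a: "a \<in> S" "a \<notin> ?U" using False by auto
      have "a \<in> ?U'" using a sub0[OF Us] by (force simp: padd_def)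
      then show ?thesis using padd_r[OF Ss, of ?U] a by auto
    qed
    have nomid: "\<not> (\<exists>N. submodule s N \<and> ?U \<subset> N \<and> N \<subset> ?U')"
    proof
      assume "\<exists>N. submodule s N \<and> ?U \<subset> N \<and> N \<subset> ?U'"
      then obtain N where N: "submodule s N" "?U \<subset> N" "N \<subset> ?U'" by auto
      obtain w where w: "w \<in> N" "w \<notin> ?U" using N by auto
      have "w \<in> ?U'" using N w by auto
      then obtain a b where ab: "w = a + b" "a \<in> S" "b \<in> ?U" unfolding padd_def by blast
      have "a = w - b" using ab by simp
      then have aN: "a \<in> N" using subdiff[OF N(1) w(1), of b] ab N(2) by auto
      have "a \<noteq> 0" using ab w by auto
      then have "N \<inter> S \<noteq> {0}" using aN ab by auto
      then have "N \<inter> S = S" using S sub_Int[OF N(1) Ss] unfolding simple_sub_def by blast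
      then have "?U' \<subseteq> N" using N subadd[OF N(1)] by (auto simp: padd_def)
      then show False using N by auto
    qed
    define c' where "c' = c(Suc d := ?U')"
    have "comp_in ?U' (Suc d) c'"
      unfolding comp_in_def
    proof (intro conjI allI impI)
      show "c' 0 = {0}" using dc by (simp add: c'_def comp_in_def)
      show "c' (Suc d) = ?U'" by (simp add: c'_def)
      fix i assume "i \<le> Suc d"
      then show "submodule s (c' i)" using dc U's
        by (cases "i = Suc d") (auto simp: c'_def comp_in_def)
    next
      fix i assume i: "i < Suc d"
      show "c' i \<subset> c' (Suc i)"
        using i dc strict by (cases "i = d") (auto simp: c'_def comp_in_def)
      show "\<not> (\<exists>N. submodule s N \<and> c' i \<subset> N \<and> N \<subset> c' (Suc i))"
        using i dc nomid by (cases "i = d") (auto simp: c'_def comp_in_def)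
    qed
    then show ?thesis using dc by (intro exI[of _ "Suc d"] exI[of _ c']) auto
  qed
qed

lemma chain_mono: "(\<forall>j<k. b j \<subseteq> b (Suc j)) \<Longrightarrow> i \<le> j \<Longrightarrow> j \<le> k \<Longrightarrow> b i \<subseteq> b j"
proof (induct j)
  case (Suc j)
  show ?case
  proof (cases "i = Suc j")
    case False
    then have "b i \<subseteq> b j" using Suc by auto
    moreover have "b j \<subseteq> b (Suc j)" using Suc.prems by auto
    ultimately show ?thesis by blast
  qed simp
qed simp

lemma chain_count: "comp_in U d c \<Longrightarrow> (\<forall>j\<le>k. submodule s (b j) \<and> b j \<subseteq> U) \<Longrightarrow>
   (\<forall>j<k. b j \<subseteq> b (Suc j)) \<Longrightarrow> card {j. j < k \<and> b j \<noteq> b (Suc j)} \<le> d"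
proof (induct d arbitrary: U b)
  case 0
  have "U = {0}" using "0.prems"(1) unfolding comp_in_def by force
  then have "\<forall>j\<le>k. b j = {0}" using 0 sub0 by blast
  then have "{j. j < k \<and> b j \<noteq> b (Suc j)} = {}" by auto
  then show ?case by simp
next
  case (Suc d)
  let ?V = "c d"
  have cV: "comp_in ?V d c" using Suc.prems(1) by (auto simp: comp_in_def)
  have Uc: "c (Suc d) = U" and Vs: "submodule s ?V" and Us: "submodule s U"
    using Suc.prems(1) unfolding comp_in_def by auto
  have "c d \<subset> c (Suc d) \<and> \<not> (\<exists>N. submodule s N \<and> c d \<subset> N \<and> N \<subset> c (Suc d))"
    using Suc.prems(1) unfolding comp_in_def by blast
  then have VU: "?V \<subset> U" and nomid: "\<not> (\<exists>N. submodule s N \<and> ?V \<subset> N \<and> N \<subset> U)"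
    using Uc by auto
  define b' where "b' j = b j \<inter> ?V" for j
  have "card {j. j < k \<and> b' j \<noteq> b' (Suc j)} \<le> d"
    apply (rule Suc.hyps[OF cV])
    using Suc.prems(2,3) sub_Int Vs by (auto simp: b'_def)
  moreover
  define P where "P j = padd (b j) ?V" for j
  let ?A1 = "{j. j < k \<and> b' j \<noteq> b' (Suc j)}"
  let ?A2 = "{j. j < k \<and> P j \<noteq> P (Suc j)}"
  have sub: "{j. j < k \<and> b j \<noteq> b (Suc j)} \<subseteq> ?A1 \<union> ?A2"
  proof
    fix j assume "j \<in> {j. j < k \<and> b j \<noteq> b (Suc j)}"
    then have j: "j < k" "b j \<noteq> b (Suc j)" by auto
    have bs: "submodule s (b (Suc j))" "b j \<subseteq> b (Suc j)" using Suc.prems(2,3) j by auto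
    show "j \<in> ?A1 \<union> ?A2"
    proof (rule ccontr)
      assume "j \<notin> ?A1 \<union> ?A2"
      then have e1: "b' j = b' (Suc j)" and e2: "P j = P (Suc j)" using j by auto
      have "b (Suc j) \<subseteq> b j"
      proof
        fix w assume w: "w \<in> b (Suc j)"
        then have "w \<in> P (Suc j)" using sub0[OF Vs] by (force simp: P_def padd_def)
        then have "w \<in> P j" using e2 by simp
        then obtain a v where av: "w = a + v" "a \<in> b j" "v \<in> ?V" unfolding P_def padd_def by blast
        have "v = w - a" using av by simp
        then have "v \<in> b (Suc j)" using subdiff[OF bs(1) w, of a] av bs(2) by auto
        then have "v \<in> b' j" using e1 av by (auto simp: b'_def)
        then show "w \<in> b j" using av subadd Suc.prems(2) j by (auto simp: b'_def)
      qed
      then show False using j bs by auto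
    qed
  qed
  have fin: "finite ?A2" by auto
  have "card ?A2 \<le> Suc 0"
    unfolding card_le_Suc0_iff_eq[OF fin]
  proof (intro ballI, rule ccontr)
    have Pmono: "P i \<subseteq> P j" if "i \<le> j" "j \<le> k" for i j
      using chain_mono[OF Suc.prems(3) that] unfolding P_def padd_def by blast
    have PV: "?V \<subseteq> P j" if "j \<le> k" for j
    proof
      fix v assume "v \<in> ?V"
      moreover have "0 \<in> b j" using Suc.prems(2) that sub0 by blast
      ultimately have "0 + v \<in> P j" unfolding P_def padd_def by blast
      then show "v \<in> P j" by simp
    qed
    have PU: "P j \<subseteq> U" if "j \<le> k" for j
    proof
      fix w assume "w \<in> P j"
      then obtain a v where "w = a + v" "a \<in> b j" "v \<in> ?V" unfolding P_def padd_def by blast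
      moreover have "b j \<subseteq> U" using Suc.prems(2) that by auto
      ultimately show "w \<in> U" using VU subadd[OF Us] by blast
    qed
    have Ps: "submodule s (P j)" if "j \<le> k" for j
      using Suc.prems(2) that padd_sub Vs unfolding P_def by blast
    have key: False if "j1 \<in> ?A2" "j2 \<in> ?A2" "j1 < j2" for j1 j2
    proof -
      have "?V \<subset> P (Suc j1)" using PV[of j1] Pmono[of j1 "Suc j1"] that by auto
      moreover have "P (Suc j1) \<subset> U"
        using Pmono[of "Suc j1" j2] Pmono[of j2 "Suc j2"] PU[of "Suc j2"] that by auto
      moreover have "Suc j1 \<le> k" using that by auto
      ultimately show False using nomid Ps[of "Suc j1"] by blast
    qed
    fix a1 a2 assume "a1 \<in> ?A2" "a2 \<in> ?A2" "a1 \<noteq> a2"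
    then show False using key[of a1 a2] key[of a2 a1] by linarith
  qed
  ultimately have "card ?A1 + card ?A2 \<le> Suc d" by simp
  moreover have "card {j. j < k \<and> b j \<noteq> b (Suc j)} \<le> card ?A1 + card ?A2"
    by (rule order_trans[OF card_mono[OF _ sub] card_Un_le]) auto
  ultimately show ?case by simp
qed

lemma chain_strict: "comp_in U d c \<Longrightarrow> (\<forall>j\<le>k. submodule s (b j) \<and> b j \<subseteq> U) \<Longrightarrow>
   (\<forall>j<k. b j \<subset> b (Suc j)) \<Longrightarrow> k \<le> d"
proof -
  assume a: "comp_in U d c" "\<forall>j\<le>k. submodule s (b j) \<and> b j \<subseteq> U" "\<forall>j<k. b j \<subset> b (Suc j)"
  have "card {j. j < k \<and> b j \<noteq> b (Suc j)} \<le> d" using chain_count[OF a(1,2)] a(3) by auto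
  moreover have "{j. j < k \<and> b j \<noteq> b (Suc j)} = {..<k}" using a(3) by auto
  ultimately show ?thesis by simp
qed

lemma fg_sumset:
  assumes ss: "semisimple s" and fg: "finitely_generated s"
  shows "\<exists>L. (\<forall>S\<in>set L. simple_sub s S) \<and> sumset L = UNIV"
proof -
  let ?T = "{v. \<exists>L. (\<forall>S\<in>set L. simple_sub s S) \<and> v \<in> sumset L}"
  have simp_sub: "\<forall>S\<in>set L. submodule s S" if "\<forall>S\<in>set L. simple_sub s S" for L
    using that by (simp add: simple_sub_def)
  have Ts: "submodule s ?T"
    unfolding submodule_def
  proof (intro conjI ballI allI)
    show "0 \<in> ?T" by (rule CollectI, rule exI[of _ "[]"]) simp
    fix x y assume "x \<in> ?T" "y \<in> ?T"
    then obtain L1 L2 where "\<forall>S\<in>set L1. simple_sub s S" "x \<in> sumset L1"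
       "\<forall>S\<in>set L2. simple_sub s S" "y \<in> sumset L2" by auto
    then show "x + y \<in> ?T" using sumset_append[OF simp_sub simp_sub, of L1 L2 x y]
      by (intro CollectI exI[of _ "L1 @ L2"]) auto
  next
    fix r x assume "x \<in> ?T"
    then obtain L where "\<forall>S\<in>set L. simple_sub s S" "x \<in> sumset L" by auto
    then show "s r x \<in> ?T" using subsc[OF sumset_sub[OF simp_sub]] by blast
  qed
  have "\<Union>{N. simple_sub s N} \<subseteq> ?T"
  proof
    fix v assume "v \<in> \<Union>{N. simple_sub s N}"
    then obtain N where "simple_sub s N" "v \<in> N" by auto
    then show "v \<in> ?T" using sumset_mem[of "[N]" N v] by (intro CollectI exI[of _ "[N]"]) (auto simp: simple_sub_def)
  qed
  then have "gen s (\<Union>{N. simple_sub s N}) \<subseteq> ?T" using gen_least[OF Ts] by blast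
  then have TU: "?T = UNIV" using ss by (auto simp: semisimple_def)
  obtain F where F: "finite F" "gen s F = UNIV" using fg by (auto simp: finitely_generated_def)
  have "\<exists>L. (\<forall>S\<in>set L. simple_sub s S) \<and> F \<subseteq> sumset L" using F(1)
  proof (induct F rule: finite_induct)
    case empty then show ?case by (intro exI[of _ "[]"]) simp
  next
    case (insert x F)
    then obtain L where L: "\<forall>S\<in>set L. simple_sub s S" "F \<subseteq> sumset L" by auto
    obtain L2 where L2: "\<forall>S\<in>set L2. simple_sub s S" "x \<in> sumset L2" using TU by blast
    have "F \<subseteq> sumset (L @ L2)" using L L2 sumset_append[OF simp_sub simp_sub, of L L2 _ 0]
      sub0[OF sumset_sub[OF simp_sub[OF L2(1)]]] by fastforce
    moreover have "x \<in> sumset (L @ L2)" using L L2 sumset_append[OF simp_sub simp_sub, of L L2 0 x]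
      sub0[OF sumset_sub[OF simp_sub[OF L(1)]]] by fastforce
    ultimately show ?case using L L2 by (intro exI[of _ "L @ L2"]) auto
  qed
  then obtain L where L: "\<forall>S\<in>set L. simple_sub s S" "F \<subseteq> sumset L" by auto
  then have "gen s F \<subseteq> sumset L" using gen_least sumset_sub[OF simp_sub] by blast
  then show ?thesis using L F by auto
qed

end



context lmod begin

lemma funpow_apply_add: "(f ^^ (m + n)) x = (f ^^ m) ((f ^^ n) x)"
  by (simp add: funpow_add)

lemma range_hom_sub: "is_hom s e \<Longrightarrow> submodule s (range e)"
  unfolding submodule_def
proof (intro conjI ballI allI)
  assume h: "is_hom s e"
  show "0 \<in> range e" using hom_0[OF h] by (metis rangeI)
  fix x y assume "x \<in> range e" "y \<in> range e"
  then obtain a b where "x = e a" "y = e b" by auto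
  then show "x + y \<in> range e" using hom_add[OF h, of a b] by (metis rangeI)
next
  fix r x assume h: "is_hom s e" and "x \<in> range e"
  then obtain a where "x = e a" by auto
  then show "s r x \<in> range e" using hom_sc[OF h, of r a] by (metis rangeI)
qed

lemma nil_bound:
  assumes hom: "is_hom s \<phi>" and n: "\<phi> ^^ n = (\<lambda>_. 0)" and p: "n \<le> p"
  shows "(\<phi> ^^ p) a = 0"
proof -
  have "p = (p - n) + n" using p by simp
  then have "(\<phi> ^^ p) a = (\<phi> ^^ (p - n)) ((\<phi> ^^ n) a)" by (metis funpow_apply_add)
  then show ?thesis using n hom_0[OF hom_funpow[OF hom]] by simp
qed

lemma invariant_funpow: "(\<forall>w\<in>A. \<phi> w \<in> A) \<Longrightarrow> a \<in> A \<Longrightarrow> (\<phi> ^^ j) a \<in> A"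
  by (induct j) auto

lemma lemma_G:
  assumes cd: "comp_in UNIV d c" and hom: "is_hom s \<phi>" and nil: "\<phi> ^^ n = (\<lambda>_. 0)"
    and As: "submodule s A" and Ainv: "\<forall>w\<in>A. \<phi> w \<in> A" and AU: "A \<noteq> UNIV"
    and aA: "a \<in> A" and anz: "(\<phi> ^^ (d - 1)) a \<noteq> 0"
  shows False
proof (cases "d = 0")
  case True
  have "UNIV = {0::'m}" using cd True unfolding comp_in_def by metis
  then show False using anz by auto
next
  case False
  define P where "P = {p. (\<phi> ^^ p) a \<noteq> 0}"
  have Pfin: "finite P"
  proof -
    have "P \<subseteq> {..<n}"
    proof
      fix q assume "q \<in> P"
      then show "q \<in> {..<n}" using nil_bound[OF hom nil, of q a] unfolding P_def by fastforce
    qed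
    then show ?thesis using finite_subset by blast
  qed
  have dP: "d - 1 \<in> P" using anz by (simp add: P_def)
  define p where "p = Max P"
  have Pne: "P \<noteq> {}" using dP by auto
  have pP: "p \<in> P" using Max_in[OF Pfin Pne] by (simp add: p_def)
  have dp: "d - 1 \<le> p" using Max_ge[OF Pfin dP] by (simp add: p_def)
  have pS: "(\<phi> ^^ Suc p) a = 0"
  proof (rule ccontr)
    assume "(\<phi> ^^ Suc p) a \<noteq> 0"
    then have "Suc p \<in> P" by (simp add: P_def)
    then show False using Pfin p_def by (metis Max_ge Suc_n_not_le_n)
  qed
  define a' where "a' = (\<phi> ^^ (p - (d - 1))) a"
  have a'A: "a' \<in> A" using invariant_funpow[OF Ainv aA] by (simp add: a'_def)
  have a1: "(\<phi> ^^ (d - 1)) a' \<noteq> 0"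
  proof -
    have "(\<phi> ^^ (d - 1)) a' = (\<phi> ^^ ((d - 1) + (p - (d - 1)))) a"
      by (simp add: a'_def funpow_apply_add)
    also have "(d - 1) + (p - (d - 1)) = p" using dp by simp
    finally show ?thesis using pP by (simp add: P_def)
  qed
  have a2: "(\<phi> ^^ d) a' = 0"
  proof -
    have "(\<phi> ^^ d) a' = (\<phi> ^^ (d + (p - (d - 1)))) a"
      by (simp add: a'_def funpow_apply_add)
    also have "d + (p - (d - 1)) = Suc p" using dp False by simp
    finally show ?thesis using pS by simp
  qed
  define b where "b j = (if j \<le> d then A \<inter> {w. (\<phi> ^^ j) w = 0} else UNIV)" for j
  have "Suc d \<le> d"
  proof (rule chain_strict[OF cd, of "Suc d" b])
    show "\<forall>j\<le>Suc d. submodule s (b j) \<and> b j \<subseteq> UNIV"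
      using sub_Int[OF As ker_sub[OF hom_funpow[OF hom]]] sub_UNIV by (simp add: b_def)
    show "\<forall>j<Suc d. b j \<subset> b (Suc j)"
    proof (intro allI impI)
      fix j assume j: "j < Suc d"
      show "b j \<subset> b (Suc j)"
      proof (cases "j = d")
        case True
        then show ?thesis using AU by (auto simp: b_def)
      next
        case False
        then have jd: "j < d" using j by simp
        have sub1: "b j \<subseteq> b (Suc j)" using jd hom_0[OF hom] by (auto simp: b_def)
        define w where "w = (\<phi> ^^ (d - 1 - j)) a'"
        have wA: "w \<in> A" using invariant_funpow[OF Ainv a'A] by (simp add: w_def)
        have "(\<phi> ^^ j) w = (\<phi> ^^ (j + (d - 1 - j))) a'" by (simp add: w_def funpow_apply_add)
        also have "j + (d - 1 - j) = d - 1" using jd by simp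
        finally have w1: "(\<phi> ^^ j) w \<noteq> 0" using a1 by simp
        have "(\<phi> ^^ Suc j) w = (\<phi> ^^ (Suc j + (d - 1 - j))) a'" by (simp add: w_def funpow_apply_add)
        also have "Suc j + (d - 1 - j) = d" using jd by simp
        finally have w2: "(\<phi> ^^ Suc j) w = 0" using a2 by simp
        have "w \<in> b (Suc j)" "w \<notin> b j" using w1 w2 wA jd by (auto simp: b_def)
        then show ?thesis using sub1 by blast
      qed
    qed
  qed
  then show False by simp
qed

end



context lmod begin

lemma s_sum: "s r (sum f F) = (\<Sum>i\<in>F. s r (f i))"
  by (induct F rule: infinite_finite_induct) (auto simp: s_add)

lemma projection:
  assumes Ks: "submodule s K" and Ys: "submodule s Y" and KY: "padd K Y = UNIV" and I: "K \<inter> Y = {0}"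
  shows "\<exists>p. is_hom s p \<and> (\<forall>v. p v \<in> Y \<and> v - p v \<in> K) \<and> (\<forall>v w. w \<in> Y \<longrightarrow> v - w \<in> K \<longrightarrow> p v = w)"
proof -
  have uniq: "w1 = w2" if "w1 \<in> Y" "v - w1 \<in> K" "w2 \<in> Y" "v - w2 \<in> K" for v w1 w2
  proof -
    have "w1 - w2 \<in> Y" using subdiff[OF Ys] that by blast
    moreover have "(v - w2) - (v - w1) \<in> K" using subdiff[OF Ks] that by blast
    moreover have "(v - w2) - (v - w1) = w1 - w2" by simp
    ultimately have "w1 - w2 \<in> K \<inter> Y" by simp
    then have "w1 - w2 = 0" using I by blast
    then show ?thesis by simp
  qed
  have ex: "\<exists>w. w \<in> Y \<and> v - w \<in> K" for v
  proof -
    have "v \<in> padd K Y" using KY by simp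
    then obtain k w where "v = k + w" "k \<in> K" "w \<in> Y" unfolding padd_def by blast
    then show ?thesis by (intro exI[of _ w]) simp
  qed
  define p where "p v = (SOME w. w \<in> Y \<and> v - w \<in> K)" for v
  have pv: "p v \<in> Y \<and> v - p v \<in> K" for v
    unfolding p_def using someI_ex[OF ex[of v]] .
  have pu: "p v = w" if "w \<in> Y" "v - w \<in> K" for v w
    using uniq[of "p v" v w] pv[of v] that by blast
  have "is_hom s p"
    unfolding is_hom_def
  proof (intro conjI allI)
    fix x y
    have "p x + p y \<in> Y" using pv subadd[OF Ys] by blast
    moreover have "(x + y) - (p x + p y) = (x - p x) + (y - p y)" by simp
    then have "(x + y) - (p x + p y) \<in> K" using pv subadd[OF Ks] by metis
    ultimately show "p (x + y) = p x + p y" using pu by blast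
  next
    fix r x
    have "s r (p x) \<in> Y" using pv subsc[OF Ys] by blast
    moreover have "s r x - s r (p x) = s r (x - p x)" by (simp add: s_diff)
    then have "s r x - s r (p x) \<in> K" using pv subsc[OF Ks] by metis
    ultimately show "p (s r x) = s r (p x)" using pu by blast
  qed
  then show ?thesis using pv pu by blast
qed

lemma complement:
  assumes ss: "semisimple s" and y: "y \<noteq> 0" and Ysimp: "simple_sub s (cyc s y)"
  shows "\<exists>K. submodule s K \<and> padd K (cyc s y) = UNIV \<and> K \<inter> cyc s y = {0}"
proof -
  let ?Y = "cyc s y"
  let ?A = "{K. submodule s K \<and> y \<notin> K}"
  have "\<forall>C\<in>chains ?A. \<exists>U\<in>?A. \<forall>X\<in>C. X \<subseteq> U"
  proof
    fix C assume C: "C \<in> chains ?A"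
    show "\<exists>U\<in>?A. \<forall>X\<in>C. X \<subseteq> U"
    proof (cases "C = {}")
      case True
      then show ?thesis using sub_zero y by (intro bexI[of _ "{0}"]) auto
    next
      case False
      have CA: "C \<subseteq> ?A" and ch: "\<forall>A\<in>C. \<forall>B\<in>C. A \<subseteq> B \<or> B \<subseteq> A"
        using C by (auto simp: chains_def chain_subset_def)
      have "submodule s (\<Union>C)"
        unfolding submodule_def
      proof (intro conjI ballI allI)
        obtain X where "X \<in> C" using False by auto
        then show "0 \<in> \<Union>C" using CA sub0 by blast
        fix a b assume "a \<in> \<Union>C" "b \<in> \<Union>C"
        then obtain X1 X2 where X: "X1 \<in> C" "X2 \<in> C" "a \<in> X1" "b \<in> X2" by auto
        show "a + b \<in> \<Union>C"
        proof (cases "X1 \<subseteq> X2")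
          case True then show ?thesis using X CA subadd by blast
        next
          case False then have "X2 \<subseteq> X1" using ch X by blast
          then show ?thesis using X CA subadd by blast
        qed
      next
        fix r a assume "a \<in> \<Union>C"
        then show "s r a \<in> \<Union>C" using CA subsc by blast
      qed
      moreover have "y \<notin> \<Union>C" using CA by blast
      ultimately show ?thesis by blast
    qed
  qed
  from Zorn_Lemma2[OF this] obtain K where K: "K \<in> ?A" and maxK: "\<forall>X\<in>?A. K \<subseteq> X \<longrightarrow> X = K"
    by blast
  have Ks: "submodule s K" and yK: "y \<notin> K" using K by auto
  have Ys: "submodule s ?Y" by (rule cyc_sub)
  have I: "K \<inter> ?Y = {0}"
  proof -
    have "K \<inter> ?Y = {0} \<or> K \<inter> ?Y = ?Y" using Ysimp sub_Int[OF Ks Ys] unfolding simple_sub_def by blast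
    moreover have "K \<inter> ?Y \<noteq> ?Y" using yK cyc_self[of y] by blast
    ultimately show ?thesis by blast
  qed
  have KY: "padd K ?Y = UNIV"
  proof (rule ccontr)
    assume ne: "padd K ?Y \<noteq> UNIV"
    have KYs: "submodule s (padd K ?Y)" using padd_sub[OF Ks Ys] .
    have "\<exists>T. simple_sub s T \<and> \<not> T \<subseteq> padd K ?Y"
    proof (rule ccontr)
      assume "\<not> (\<exists>T. simple_sub s T \<and> \<not> T \<subseteq> padd K ?Y)"
      then have "\<Union>{N. simple_sub s N} \<subseteq> padd K ?Y" by blast
      then have "gen s (\<Union>{N. simple_sub s N}) \<subseteq> padd K ?Y" using gen_least[OF KYs] by blast
      then show False using ss ne by (auto simp: semisimple_def)
    qed
    then obtain T where T: "simple_sub s T" "\<not> T \<subseteq> padd K ?Y" by blast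
    have Ts: "submodule s T" using T by (simp add: simple_sub_def)
    have TI: "T \<inter> padd K ?Y = {0}"
    proof -
      have "T \<inter> padd K ?Y = {0} \<or> T \<inter> padd K ?Y = T" using T(1) sub_Int[OF Ts KYs] unfolding simple_sub_def by blast
      then show ?thesis using T(2) by blast
    qed
    let ?K' = "padd K T"
    have K's: "submodule s ?K'" using padd_sub[OF Ks Ts] .
    have yK': "y \<notin> ?K'"
    proof
      assume "y \<in> ?K'"
      then obtain k t where kt: "y = k + t" "k \<in> K" "t \<in> T" unfolding padd_def by blast
      have "t = (- k) + y" using kt by (simp add: algebra_simps)
      moreover have "- k \<in> K" using subneg[OF Ks kt(2)] .
      ultimately have "t \<in> padd K ?Y" using cyc_self[of y] unfolding padd_def by blast
      then have "t = 0" using TI kt by blast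
      then show False using kt yK by simp
    qed
    have KK': "K \<subseteq> ?K'" using padd_l[OF Ts] .
    have "?K' \<noteq> K"
    proof
      assume eq: "?K' = K"
      have "T \<subseteq> ?K'" using padd_r[OF Ks] .
      then have "T \<subseteq> K" using eq by simp
      then have "T \<subseteq> padd K ?Y" using padd_l[OF Ys] by blast
      then show False using T(2) by blast
    qed
    then show False using maxK K's yK' KK' by blast
  qed
  show ?thesis using Ks KY I by blast
qed

end



locale jc = lmod s for s :: "'r::ring_1 \<Rightarrow> 'm::ab_group_add \<Rightarrow> 'm" +
  fixes \<phi> :: "'m \<Rightarrow> 'm" and x :: 'm and m :: nat and lam :: "'m \<Rightarrow> 'm"
  assumes hom: "is_hom s \<phi>"
    and Xsimp: "simple_sub s (cyc s x)"
    and nilm: "\<phi> ^^ m = (\<lambda>_. 0)"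
    and top: "(\<phi> ^^ (m - 1)) x \<noteq> 0"
    and lam: "is_hom s lam"
    and lamY: "\<forall>v. lam v \<in> cyc s ((\<phi> ^^ (m - 1)) x)"
    and lamfix: "\<forall>w\<in>cyc s ((\<phi> ^^ (m - 1)) x). lam w = w"
begin

abbreviation "X \<equiv> cyc s x"
abbreviation "Y \<equiv> cyc s ((\<phi> ^^ (m - 1)) x)"

lemma homp: "is_hom s (\<phi> ^^ j)" using hom_funpow[OF hom] .

lemma m_pos: "0 < m"
proof (rule ccontr)
  assume "\<not> 0 < m"
  then have m0: "m = 0" by simp
  then have "(\<phi> ^^ 0) x = 0" using nilm by metis
  then show False using top m0 by simp
qed

lemma big0: "m \<le> j \<Longrightarrow> (\<phi> ^^ j) v = 0"
  using nil_bound[OF hom nilm] by blast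

lemma F1: "z \<in> X \<Longrightarrow> (\<phi> ^^ (m - 1)) z = 0 \<Longrightarrow> z = 0"
proof (rule ccontr)
  assume z: "z \<in> X" "(\<phi> ^^ (m - 1)) z = 0" "z \<noteq> 0"
  then have "cyc s z = X" using simple_cyc_eq[OF Xsimp] by blast
  then have "x \<in> cyc s z" using cyc_self by blast
  then obtain r where "x = s r z" by (auto simp: cyc_def)
  then have "(\<phi> ^^ (m - 1)) x = s r ((\<phi> ^^ (m - 1)) z)" using hom_sc[OF homp] by simp
  then show False using z top by simp
qed

lemma F5: "w \<in> cyc s ((\<phi> ^^ j) x) \<longleftrightarrow> (\<exists>z\<in>X. (\<phi> ^^ j) z = w)"
proof
  assume "w \<in> cyc s ((\<phi> ^^ j) x)"
  then obtain r where "w = s r ((\<phi> ^^ j) x)" by (auto simp: cyc_def)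
  then have "w = (\<phi> ^^ j) (s r x)" using hom_sc[OF homp] by simp
  moreover have "s r x \<in> X" by (auto simp: cyc_def)
  ultimately show "\<exists>z\<in>X. (\<phi> ^^ j) z = w" by blast
next
  assume "\<exists>z\<in>X. (\<phi> ^^ j) z = w"
  then obtain r where "w = (\<phi> ^^ j) (s r x)" by (auto simp: cyc_def)
  then have "w = s r ((\<phi> ^^ j) x)" using hom_sc[OF homp] by simp
  then show "w \<in> cyc s ((\<phi> ^^ j) x)" by (auto simp: cyc_def)
qed

lemma F2: "z \<in> X \<Longrightarrow> (\<phi> ^^ (m - 1)) z \<in> Y" using F5 by blast

lemma xnz: "x \<noteq> 0" using top hom_0[OF homp] by auto

lemma phij_nz: "j < m \<Longrightarrow> (\<phi> ^^ j) x \<noteq> 0"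
proof
  assume j: "j < m" and z: "(\<phi> ^^ j) x = 0"
  have "(\<phi> ^^ (m - 1)) x = (\<phi> ^^ ((m - 1 - j) + j)) x" using j by (simp add: funpow_apply_add)
  also have "\<dots> = 0" using z hom_0[OF homp] by (simp add: funpow_apply_add)
  finally show False using top by simp
qed

lemma simple_j: "j < m \<Longrightarrow> simple_sub s (cyc s ((\<phi> ^^ j) x))"
proof (rule simple_cycI)
  assume j: "j < m"
  show "(\<phi> ^^ j) x \<noteq> 0" using phij_nz[OF j] .
  fix w assume w: "w \<in> cyc s ((\<phi> ^^ j) x)" "w \<noteq> 0"
  then obtain r where r: "w = s r ((\<phi> ^^ j) x)" by (auto simp: cyc_def)
  then have wr: "w = (\<phi> ^^ j) (s r x)" using hom_sc[OF homp] by simp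
  have "s r x \<noteq> 0" using w wr hom_0[OF homp] by auto
  moreover have "s r x \<in> X" by (auto simp: cyc_def)
  ultimately have "cyc s (s r x) = X" using simple_cyc_eq[OF Xsimp] by blast
  then have "x \<in> cyc s (s r x)" using cyc_self by blast
  then obtain r' where xr: "x = s r' (s r x)" by (auto simp: cyc_def)
  have "(\<phi> ^^ j) x = s r' ((\<phi> ^^ j) (s r x))" by (metis hom_sc[OF homp] xr)
  then have "(\<phi> ^^ j) x = s r' w" using wr by simp
  then show "(\<phi> ^^ j) x \<in> cyc s w" by (auto simp: cyc_def)
qed

definition N :: "'m set" where
  "N = {v. \<exists>z. (\<forall>i<m. z i \<in> X) \<and> v = (\<Sum>i<m. (\<phi> ^^ i) (z i))}"

definition C :: "'m set" where
  "C = {v. \<forall>j. lam ((\<phi> ^^ j) v) = 0}"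

lemma sum_single:
  assumes "i < m" "\<And>j. j < m \<Longrightarrow> j \<noteq> i \<Longrightarrow> g j = 0"
  shows "(\<Sum>j<m. g j) = (g i :: 'm)"
proof -
  have "(\<Sum>j<m. g j) = g i + (\<Sum>j\<in>{..<m} - {i}. g j)"
    using assms(1) by (simp add: sum.remove)
  also have "(\<Sum>j\<in>{..<m} - {i}. g j) = 0" using assms(2) by (intro sum.neutral) auto
  finally show ?thesis by simp
qed

lemma Ind:
  assumes z: "\<forall>i<m. z i \<in> X"
    and c: "\<forall>i<m. lam ((\<phi> ^^ (m - 1 - i)) (\<Sum>j<m. (\<phi> ^^ j) (z j))) = 0"
  shows "\<forall>i<m. z i = 0"
proof -
  have "i < m \<longrightarrow> z i = 0" for i
  proof (induct i rule: less_induct)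
    case (less i)
    show ?case
    proof
      assume im: "i < m"
      have "(\<phi> ^^ (m - 1 - i)) (\<Sum>j<m. (\<phi> ^^ j) (z j)) = (\<Sum>j<m. (\<phi> ^^ (m - 1 - i)) ((\<phi> ^^ j) (z j)))"
        using hom_sum[OF homp] by blast
      also have "\<dots> = (\<phi> ^^ (m - 1 - i)) ((\<phi> ^^ i) (z i))"
      proof (rule sum_single[OF im])
        fix j assume j: "j < m" "j \<noteq> i"
        show "(\<phi> ^^ (m - 1 - i)) ((\<phi> ^^ j) (z j)) = 0"
        proof (cases "j < i")
          case True
          then have "z j = 0" using less j by auto
          then show ?thesis using hom_0[OF homp] by simp
        next
          case False
          then have "m \<le> (m - 1 - i) + j" using j im by simp
          then show ?thesis using big0 by (simp add: funpow_apply_add[symmetric])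
        qed
      qed
      also have "\<dots> = (\<phi> ^^ (m - 1)) (z i)"
        using im by (simp add: funpow_apply_add[symmetric])
      finally have eq: "(\<phi> ^^ (m - 1 - i)) (\<Sum>j<m. (\<phi> ^^ j) (z j)) = (\<phi> ^^ (m - 1)) (z i)" .
      have "lam ((\<phi> ^^ (m - 1 - i)) (\<Sum>j<m. (\<phi> ^^ j) (z j))) = 0" using c im by blast
      then have "lam ((\<phi> ^^ (m - 1)) (z i)) = 0" by (simp only: eq)
      then have "(\<phi> ^^ (m - 1)) (z i) = 0" using lamfix F2 z im by simp
      then show "z i = 0" using F1 z im by blast
    qed
  qed
  then show ?thesis by blast
qed

lemma C_sub: "submodule s C"
proof -
  have "C = (\<Inter>j. {v. (lam \<circ> (\<phi> ^^ j)) v = 0})" by (auto simp: C_def)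
  moreover have "submodule s (\<Inter>j. {v. (lam \<circ> (\<phi> ^^ j)) v = 0})"
    using ker_sub[OF hom_comp[OF lam homp]] unfolding submodule_def by blast
  ultimately show ?thesis by simp
qed

lemma C_inv: "v \<in> C \<Longrightarrow> \<phi> v \<in> C"
proof -
  assume v: "v \<in> C"
  have "lam ((\<phi> ^^ j) (\<phi> v)) = 0" for j
  proof -
    have "(\<phi> ^^ j) (\<phi> v) = (\<phi> ^^ Suc j) v" by (simp add: funpow_swap1)
    moreover have "lam ((\<phi> ^^ Suc j) v) = 0" using v unfolding C_def by blast
    ultimately show ?thesis by simp
  qed
  then show ?thesis by (simp add: C_def)
qed

lemma N_sub: "submodule s N"
  unfolding submodule_def
proof (intro conjI ballI allI)
  show "0 \<in> N" unfolding N_def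
    by (rule CollectI, rule exI[of _ "\<lambda>_. 0"]) (simp add: sub0[OF cyc_sub] hom_0[OF homp])
  fix a b assume "a \<in> N" "b \<in> N"
  then obtain z z' where z: "\<forall>i<m. z i \<in> X" "a = (\<Sum>i<m. (\<phi> ^^ i) (z i))"
    and z': "\<forall>i<m. z' i \<in> X" "b = (\<Sum>i<m. (\<phi> ^^ i) (z' i))" unfolding N_def by blast
  have "a + b = (\<Sum>i<m. (\<phi> ^^ i) (z i) + (\<phi> ^^ i) (z' i))"
    unfolding z(2) z'(2) by (rule sum.distrib[symmetric])
  also have "\<dots> = (\<Sum>i<m. (\<phi> ^^ i) (z i + z' i))"
    using hom_add[OF homp] by simp
  finally have "a + b = (\<Sum>i<m. (\<phi> ^^ i) (z i + z' i))" .
  moreover have "\<forall>i<m. z i + z' i \<in> X" using z z' subadd[OF cyc_sub] by blast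
  ultimately show "a + b \<in> N" unfolding N_def
    by (intro CollectI exI[of _ "\<lambda>i. z i + z' i"] conjI) auto
next
  fix r a assume "a \<in> N"
  then obtain z where z: "\<forall>i<m. z i \<in> X" "a = (\<Sum>i<m. (\<phi> ^^ i) (z i))" unfolding N_def by blast
  have "s r a = (\<Sum>i<m. s r ((\<phi> ^^ i) (z i)))"
    unfolding z(2) by (rule s_sum)
  also have "\<dots> = (\<Sum>i<m. (\<phi> ^^ i) (s r (z i)))"
    using hom_sc[OF homp] by simp
  finally have "s r a = (\<Sum>i<m. (\<phi> ^^ i) (s r (z i)))" .
  moreover have "\<forall>i<m. s r (z i) \<in> X" using z subsc[OF cyc_sub] by blast
  ultimately show "s r a \<in> N" unfolding N_def
    by (intro CollectI exI[of _ "\<lambda>i. s r (z i)"] conjI) auto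
qed

lemma x_N: "x \<in> N"
proof -
  define z :: "nat \<Rightarrow> 'm" where "z i = (if i = 0 then x else 0)" for i
  have "(\<Sum>i<m. (\<phi> ^^ i) (z i)) = (\<phi> ^^ 0) (z 0)"
  proof (rule sum_single[OF m_pos])
    fix j :: nat assume "j < m" "j \<noteq> 0"
    then have "z j = 0" by (simp add: z_def)
    then show "(\<phi> ^^ j) (z j) = 0" using hom_0[OF homp] by simp
  qed
  then have e: "x = (\<Sum>i<m. (\<phi> ^^ i) (z i))" by (simp add: z_def)
  have "\<forall>i<m. z i \<in> X" using cyc_self sub0[OF cyc_sub] by (auto simp: z_def)
  then show ?thesis unfolding N_def using e by (intro CollectI exI[of _ z] conjI) auto
qed

lemma NC: "N \<inter> C = {0}"
proof -
  have "v = 0" if v: "v \<in> N" "v \<in> C" for v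
  proof -
    obtain z where z: "\<forall>i<m. z i \<in> X" "v = (\<Sum>i<m. (\<phi> ^^ i) (z i))" using v unfolding N_def by blast
    have "\<forall>j. lam ((\<phi> ^^ j) v) = 0" using v(2) unfolding C_def by simp
    then have "\<forall>i<m. lam ((\<phi> ^^ (m - 1 - i)) (\<Sum>j<m. (\<phi> ^^ j) (z j))) = 0"
      unfolding z(2) by blast
    then have z0: "\<forall>i<m. z i = 0" using Ind[OF z(1)] by blast
    have "(\<Sum>j<m. (\<phi> ^^ j) (z j)) = 0"
      by (rule sum.neutral) (use z0 hom_0[OF homp] in auto)
    then show "v = 0" using z(2) by simp
  qed
  moreover have "0 \<in> N \<inter> C" using sub0[OF N_sub] sub0[OF C_sub] by simp
  ultimately show ?thesis by auto
qed

end



context jc begin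

lemma construct:
  "\<exists>z. \<forall>i<t. z i \<in> X \<and> (\<phi> ^^ (m - 1)) (z i) = lam ((\<phi> ^^ (m - 1 - i)) (v - (\<Sum>k<i. (\<phi> ^^ k) (z k))))"
proof (induct t)
  case 0 then show ?case by simp
next
  case (Suc t)
  then obtain z where z: "\<forall>i<t. z i \<in> X \<and> (\<phi> ^^ (m - 1)) (z i) = lam ((\<phi> ^^ (m - 1 - i)) (v - (\<Sum>k<i. (\<phi> ^^ k) (z k))))"
    by blast
  have "lam ((\<phi> ^^ (m - 1 - t)) (v - (\<Sum>k<t. (\<phi> ^^ k) (z k)))) \<in> Y" using lamY by blast
  then obtain z' where z': "z' \<in> X" "(\<phi> ^^ (m - 1)) z' = lam ((\<phi> ^^ (m - 1 - t)) (v - (\<Sum>k<t. (\<phi> ^^ k) (z k))))"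
    using F5 by blast
  define z2 where "z2 = z(t := z')"
  have sums: "(\<Sum>k<i. (\<phi> ^^ k) (z2 k)) = (\<Sum>k<i. (\<phi> ^^ k) (z k))" if "i \<le> t" for i
    using that by (intro sum.cong) (auto simp: z2_def)
  have "\<forall>i<Suc t. z2 i \<in> X \<and> (\<phi> ^^ (m - 1)) (z2 i) = lam ((\<phi> ^^ (m - 1 - i)) (v - (\<Sum>k<i. (\<phi> ^^ k) (z2 k))))"
  proof (intro allI impI)
    fix i assume i: "i < Suc t"
    show "z2 i \<in> X \<and> (\<phi> ^^ (m - 1)) (z2 i) = lam ((\<phi> ^^ (m - 1 - i)) (v - (\<Sum>k<i. (\<phi> ^^ k) (z2 k))))"
    proof (cases "i = t")
      case True
      then show ?thesis using z' sums[of t] by (simp add: z2_def)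
    next
      case False
      then have "i < t" using i by simp
      then show ?thesis using z sums[of i] by (simp add: z2_def)
    qed
  qed
  then show ?case by blast
qed

lemma decomp: "\<exists>z. (\<forall>i<m. z i \<in> X) \<and> v - (\<Sum>i<m. (\<phi> ^^ i) (z i)) \<in> C"
proof -
  obtain z where z: "\<forall>i<m. z i \<in> X \<and> (\<phi> ^^ (m - 1)) (z i) = lam ((\<phi> ^^ (m - 1 - i)) (v - (\<Sum>k<i. (\<phi> ^^ k) (z k))))"
    using construct by blast
  define g where "g i = (\<phi> ^^ i) (z i)" for i
  define S where "S = (\<Sum>i<m. g i)"
  have "lam ((\<phi> ^^ j) (v - S)) = 0" for j
  proof (cases "m \<le> j")
    case True
    then show ?thesis using big0 hom_0[OF lam] by simp
  next
    case False
    define t where "t = m - 1 - j"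
    have tm: "t < m" and jt: "j = m - 1 - t" and jt': "j + t = m - 1" using False by (auto simp: t_def)
    have "S = (\<Sum>i\<in>{0..<t}. g i) + (\<Sum>i\<in>{t..<m}. g i)"
      unfolding S_def using tm sum.atLeastLessThan_concat[of 0 t m g] by (simp add: atLeast0LessThan)
    also have "(\<Sum>i\<in>{t..<m}. g i) = g t + (\<Sum>i\<in>{Suc t..<m}. g i)"
      using tm by (rule sum.atLeast_Suc_lessThan)
    finally have S: "S = (\<Sum>i<t. g i) + g t + (\<Sum>i\<in>{Suc t..<m}. g i)"
      by (simp add: atLeast0LessThan add.assoc)
    have rest: "(\<phi> ^^ j) (\<Sum>i\<in>{Suc t..<m}. g i) = 0"
    proof -
      have "(\<phi> ^^ j) (\<Sum>i\<in>{Suc t..<m}. g i) = (\<Sum>i\<in>{Suc t..<m}. (\<phi> ^^ j) (g i))"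
        by (rule hom_sum[OF homp])
      also have "\<dots> = 0"
      proof (rule sum.neutral, rule ballI)
        fix i assume "i \<in> {Suc t..<m}"
        then have "m \<le> j + i" using jt' by auto
        then show "(\<phi> ^^ j) (g i) = 0" unfolding g_def using big0 by (simp add: funpow_apply_add[symmetric])
      qed
      finally show ?thesis .
    qed
    have gt: "(\<phi> ^^ j) (g t) = (\<phi> ^^ (m - 1)) (z t)"
      unfolding g_def using jt' by (simp add: funpow_apply_add[symmetric])
    have pS: "(\<phi> ^^ j) S = (\<phi> ^^ j) (\<Sum>i<t. g i) + (\<phi> ^^ (m - 1)) (z t)"
      unfolding S using hom_add[OF homp] rest gt by simp
    have zt: "(\<phi> ^^ (m - 1)) (z t) = lam ((\<phi> ^^ j) v) - lam ((\<phi> ^^ j) (\<Sum>i<t. g i))"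
      using z tm jt hom_diff[OF homp] hom_diff[OF lam] unfolding g_def by simp
    have lz: "lam ((\<phi> ^^ (m - 1)) (z t)) = (\<phi> ^^ (m - 1)) (z t)"
      using lamfix F2 z tm by blast
    have "lam ((\<phi> ^^ j) (v - S)) = lam ((\<phi> ^^ j) v) - lam ((\<phi> ^^ j) (\<Sum>i<t. g i)) - lam ((\<phi> ^^ (m - 1)) (z t))"
    proof -
      have "lam ((\<phi> ^^ j) (v - S)) = lam ((\<phi> ^^ j) v) - lam ((\<phi> ^^ j) S)"
        by (simp only: hom_diff[OF homp] hom_diff[OF lam])
      also have "lam ((\<phi> ^^ j) S) = lam ((\<phi> ^^ j) (\<Sum>i<t. g i)) + lam ((\<phi> ^^ (m - 1)) (z t))"
        by (simp only: pS hom_add[OF lam])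
      finally show ?thesis by (simp add: algebra_simps)
    qed
    then show ?thesis using zt lz by simp
  qed
  then have "v - S \<in> C" by (simp add: C_def)
  then show ?thesis using z unfolding S_def g_def by blast
qed

lemma NC_UNIV: "padd N C = UNIV"
proof -
  have "v \<in> padd N C" for v
  proof -
    obtain z where z: "\<forall>i<m. z i \<in> X" "v - (\<Sum>i<m. (\<phi> ^^ i) (z i)) \<in> C" using decomp by blast
    have "(\<Sum>i<m. (\<phi> ^^ i) (z i)) \<in> N" unfolding N_def using z(1)
      by (intro CollectI exI[of _ z] conjI) auto
    moreover have "v = (\<Sum>i<m. (\<phi> ^^ i) (z i)) + (v - (\<Sum>i<m. (\<phi> ^^ i) (z i)))" by simp
    ultimately show ?thesis using z(2) unfolding padd_def by blast
  qed
  then show ?thesis by blast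
qed

end



context jc begin

lemma N_inv: "v \<in> N \<Longrightarrow> \<phi> v \<in> N"
proof -
  assume "v \<in> N"
  then obtain z where z: "\<forall>i<m. z i \<in> X" "v = (\<Sum>i<m. (\<phi> ^^ i) (z i))" unfolding N_def by blast
  obtain m' where m': "m = Suc m'" using m_pos by (cases m) auto
  define z' where "z' i = (if i = 0 then 0 else z (i - 1))" for i
  have "\<phi> v = (\<Sum>i<m. \<phi> ((\<phi> ^^ i) (z i)))" unfolding z(2) by (rule hom_sum[OF hom])
  also have "\<dots> = (\<Sum>i<m. (\<phi> ^^ Suc i) (z i))" by simp
  also have "\<dots> = (\<Sum>i<m'. (\<phi> ^^ Suc i) (z i)) + (\<phi> ^^ m) (z m')" unfolding m' by simp
  also have "(\<phi> ^^ m) (z m') = 0" using nilm by simp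
  also have "(\<Sum>i<m'. (\<phi> ^^ Suc i) (z i)) = (\<Sum>i<m. (\<phi> ^^ i) (z' i))"
    unfolding m' sum.lessThan_Suc_shift by (simp add: z'_def hom_0[OF hom])
  finally have e: "\<phi> v = (\<Sum>i<m. (\<phi> ^^ i) (z' i))" by simp
  have "\<forall>i<m. z' i \<in> X" using z(1) sub0[OF cyc_sub] by (auto simp: z'_def)
  then show "\<phi> v \<in> N" unfolding N_def using e by (intro CollectI exI[of _ z'] conjI) auto
qed

lemma case_decomposable:
  assumes Cnz: "C \<noteq> {0}"
  shows "decomposable_nilpotent (End_ring s) \<phi>"
proof -
  obtain e where e: "is_hom s e" "\<forall>v. e v \<in> C \<and> v - e v \<in> N"
    and eu: "\<forall>v w. w \<in> C \<longrightarrow> v - w \<in> N \<longrightarrow> e v = w"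
    using projection[OF N_sub C_sub NC_UNIV NC] by blast
  have ee: "e \<circ> e = e"
  proof
    fix v show "(e \<circ> e) v = e v" using eu e(2) sub0[OF N_sub] by simp
  qed
  have ephi: "e \<circ> \<phi> = \<phi> \<circ> e"
  proof
    fix v
    have "\<phi> (e v) \<in> C" using C_inv e(2) by blast
    moreover have "\<phi> v - \<phi> (e v) \<in> N" using N_inv e(2) hom_diff[OF hom] by metis
    ultimately show "(e \<circ> \<phi>) v = (\<phi> \<circ> e) v" using eu by simp
  qed
  have enz: "e \<noteq> (\<lambda>_. 0)"
  proof
    assume ez: "e = (\<lambda>_. 0)"
    obtain c where c: "c \<in> C" "c \<noteq> 0" using Cnz sub0[OF C_sub] by blast
    have "e c = c" using eu c sub0[OF N_sub] by simp
    then show False using ez c by simp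
  qed
  have eid: "e \<noteq> id"
  proof
    assume "e = id"
    moreover have "e x = 0" using eu sub0[OF C_sub] x_N by simp
    ultimately show False using xnz by simp
  qed
  have nil: "nilpotent_elem (End_ring s) \<phi>"
  proof -
    have "\<phi> [^]\<^bsub>End_ring s\<^esub> m = (\<lambda>_. 0)" by (simp add: nat_pow_End nilm)
    moreover have "\<zero>\<^bsub>End_ring s\<^esub> = (\<lambda>_. 0)" "carrier (End_ring s) = {f. is_hom s f}"
      by (simp_all add: End_ring_def)
    ultimately show ?thesis unfolding nilpotent_elem_def using hom by auto
  qed
  show ?thesis unfolding decomposable_nilpotent_def
    using nil e(1) ee ephi enz eid by (auto simp: End_ring_def intro!: bexI[of _ e])
qed

lemma case_jordan:
  assumes C0: "C = {0}"
  shows "nilpotent_jordan_base s \<phi> (UNIV :: unit set) (\<lambda>_. m) (\<lambda>_ i. (\<phi> ^^ (i - 1)) x)"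
proof -
  have NU: "N = UNIV"
  proof -
    have "v \<in> N" for v
    proof -
      have "v \<in> padd N C" using NC_UNIV by simp
      then obtain a c where ac: "v = a + c" "a \<in> N" "c \<in> C" unfolding padd_def by blast
      then have "c = 0" using C0 by blast
      then show ?thesis using ac by simp
    qed
    then show ?thesis by blast
  qed
  let ?N' = "\<lambda>(\<gamma>::unit, i). cyc s ((\<phi> ^^ (i - 1)) x)"
  let ?J = "SIGMA \<gamma>:(UNIV::unit set). {1..m}"
  have gen: "gen s (\<Union>p\<in>?J. ?N' p) = UNIV"
  proof -
    have "v \<in> gen s (\<Union>p\<in>?J. ?N' p)" for v
    proof -
      have "v \<in> N" using NU by simp
      then obtain z where z: "\<forall>i<m. z i \<in> X" "v = (\<Sum>i<m. (\<phi> ^^ i) (z i))" unfolding N_def by blast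
      have "(\<phi> ^^ i) (z i) \<in> gen s (\<Union>p\<in>?J. ?N' p)" if i: "i < m" for i
      proof -
        have zi: "z i \<in> X" using z(1) i by blast
        have "(\<phi> ^^ i) (z i) \<in> cyc s ((\<phi> ^^ i) x)" unfolding F5 using zi by blast
        then have "(\<phi> ^^ i) (z i) \<in> ?N' ((), Suc i)" by simp
        moreover have "((), Suc i) \<in> ?J" using i by simp
        ultimately have "(\<phi> ^^ i) (z i) \<in> (\<Union>p\<in>?J. ?N' p)" by (rule UN_I[rotated])
        then show ?thesis by (rule subsetD[OF gen_sup])
      qed
      then show ?thesis unfolding z(2) by (intro subsum[OF gen_sub]) simp
    qed
    then show ?thesis by blast
  qed
  have indep: "\<forall>p\<in>F. f p = 0" if F: "finite F" "F \<subseteq> ?J" "\<forall>p\<in>F. f p \<in> ?N' p" "sum f F = 0" for F f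
  proof -
    define z where "z k = (if ((), Suc k) \<in> F then (SOME z. z \<in> X \<and> (\<phi> ^^ k) z = f ((), Suc k)) else 0)" for k
    have zk: "z k \<in> X \<and> (\<phi> ^^ k) (z k) = (if ((), Suc k) \<in> F then f ((), Suc k) else 0)" for k
    proof (cases "((), Suc k) \<in> F")
      case True
      then have "f ((), Suc k) \<in> ?N' ((), Suc k)" by (rule bspec[OF F(3)])
      then have "f ((), Suc k) \<in> cyc s ((\<phi> ^^ k) x)" by simp
      then have "\<exists>z\<in>X. (\<phi> ^^ k) z = f ((), Suc k)" unfolding F5 .
      then have "\<exists>z. z \<in> X \<and> (\<phi> ^^ k) z = f ((), Suc k)" by blast
      then have "(SOME z. z \<in> X \<and> (\<phi> ^^ k) z = f ((), Suc k)) \<in> X \<and>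
          (\<phi> ^^ k) (SOME z. z \<in> X \<and> (\<phi> ^^ k) z = f ((), Suc k)) = f ((), Suc k)"
        by (rule someI_ex)
      then show ?thesis using True unfolding z_def by simp
    next
      case False
      then show ?thesis unfolding z_def using sub0[OF cyc_sub] hom_0[OF homp] by simp
    qed
    define h where "h p = (if p \<in> F then f p else 0)" for p
    have "sum f F = sum h ?J"
      by (rule sum.mono_neutral_cong_left) (use F in \<open>auto simp: h_def\<close>)
    also have "?J = Pair () ` {Suc 0..m}" by auto
    also have "sum h (Pair () ` {Suc 0..m}) = sum (h \<circ> Pair ()) {Suc 0..m}"
      by (rule sum.reindex) (auto simp: inj_on_def)
    also have "\<dots> = (\<Sum>k<m. (h \<circ> Pair ()) (Suc k))" by (rule sum.atLeast1_atMost_eq)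
    also have "\<dots> = (\<Sum>k<m. (\<phi> ^^ k) (z k))" using zk by (intro sum.cong) (auto simp: h_def)
    finally have s0: "(\<Sum>k<m. (\<phi> ^^ k) (z k)) = 0" using F(4) by simp
    have "\<forall>i<m. lam ((\<phi> ^^ (m - 1 - i)) (\<Sum>j<m. (\<phi> ^^ j) (z j))) = 0"
      unfolding s0 using hom_0[OF homp] hom_0[OF lam] by simp
    moreover have "\<forall>i<m. z i \<in> X" using zk by blast
    ultimately have z0: "\<forall>i<m. z i = 0" using Ind by blast
    show ?thesis
    proof
      fix p assume p: "p \<in> F"
      have pJ: "p \<in> ?J" using F(2) p by blast
      obtain i where pi: "p = ((), i)" by (cases p) simp
      then have i1: "1 \<le> i" "i \<le> m" using pJ by auto
      define k where "k = i - 1"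
      have k: "i = Suc k" "k < m" using i1 by (auto simp: k_def)
      have "(\<phi> ^^ k) (z k) = f p" using zk[of k] p pi k by simp
      then show "f p = 0" using z0 k hom_0[OF homp] by simp
    qed
  qed
  have A1: "\<forall>\<gamma>\<in>(UNIV::unit set). 1 \<le> m" using m_pos by simp
  have A2: "\<forall>\<gamma>\<in>(UNIV::unit set). \<forall>i\<in>{1..m}. simple_sub s (cyc s ((\<phi> ^^ (i - 1)) x))"
    using simple_j by auto
  have A3: "direct_sum s ?N' ?J"
    unfolding direct_sum_def
  proof (intro conjI)
    show "\<forall>j\<in>?J. submodule s (?N' j)" using cyc_sub by auto
    show "gen s (\<Union>p\<in>?J. ?N' p) = UNIV" by (rule gen)
    show "\<forall>F f. finite F \<and> F \<subseteq> ?J \<and> (\<forall>j\<in>F. f j \<in> ?N' j) \<and> sum f F = 0 \<longrightarrow> (\<forall>j\<in>F. f j = 0)"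
      using indep by blast
  qed
  have A4: "\<forall>\<gamma>\<in>(UNIV::unit set). \<forall>i. 1 \<le> i \<and> i < m \<longrightarrow> \<phi> ((\<phi> ^^ (i - 1)) x) = (\<phi> ^^ (Suc i - 1)) x"
  proof (intro ballI allI impI)
    fix i assume "1 \<le> i \<and> i < m"
    then have e: "Suc i - 1 = Suc (i - 1)" by simp
    have "\<phi> ((\<phi> ^^ (i - 1)) x) = (\<phi> ^^ Suc (i - 1)) x" by simp
    then show "\<phi> ((\<phi> ^^ (i - 1)) x) = (\<phi> ^^ (Suc i - 1)) x" by (simp only: e)
  qed
  have A5: "\<forall>\<gamma>\<in>(UNIV::unit set). \<phi> ((\<phi> ^^ (m - 1)) x) = 0"
  proof
    have "\<phi> ((\<phi> ^^ (m - 1)) x) = (\<phi> ^^ Suc (m - 1)) x" by simp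
    also have "Suc (m - 1) = m" using m_pos by simp
    finally show "\<phi> ((\<phi> ^^ (m - 1)) x) = 0" using nilm by simp
  qed
  have A6: "bdd_above (range (\<lambda>_::unit. m))" by (rule bdd_aboveI[of _ m]) auto
  show ?thesis unfolding nilpotent_jordan_base_def using A1 A2 A3 A4 A5 A6 by simp
qed

end



context lmod begin

lemma simple_image:
  assumes f: "is_hom s f" and X: "simple_sub s (cyc s x)" and nz: "f x \<noteq> 0"
  shows "simple_sub s (cyc s (f x))"
proof (rule simple_cycI[OF nz])
  fix w assume w: "w \<in> cyc s (f x)" "w \<noteq> 0"
  then obtain r where "w = s r (f x)" by (auto simp: cyc_def)
  then have wr: "w = f (s r x)" using hom_sc[OF f] by simp
  have "s r x \<noteq> 0" using w wr hom_0[OF f] by auto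
  moreover have "s r x \<in> cyc s x" by (auto simp: cyc_def)
  ultimately have "cyc s (s r x) = cyc s x" using simple_cyc_eq[OF X] by blast
  then have "x \<in> cyc s (s r x)" using cyc_self by blast
  then obtain r' where xr: "x = s r' (s r x)" by (auto simp: cyc_def)
  have "f x = s r' (f (s r x))" by (metis hom_sc[OF f] xr)
  then have "f x = s r' w" using wr by simp
  then show "f x \<in> cyc s w" by (auto simp: cyc_def)
qed

lemma exists_x:
  assumes ss: "semisimple s" and f: "is_hom s f" and fnz: "f \<noteq> (\<lambda>_. 0)"
  shows "\<exists>x. simple_sub s (cyc s x) \<and> f x \<noteq> 0"
proof (rule ccontr)
  assume "\<not> (\<exists>x. simple_sub s (cyc s x) \<and> f x \<noteq> 0)"
  then have h: "\<And>x. simple_sub s (cyc s x) \<Longrightarrow> f x = 0" by blast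
  have "\<Union>{N. simple_sub s N} \<subseteq> {v. f v = 0}"
  proof
    fix v assume "v \<in> \<Union>{N. simple_sub s N}"
    then obtain S where S: "simple_sub s S" "v \<in> S" by auto
    show "v \<in> {v. f v = 0}"
    proof (cases "v = 0")
      case True then show ?thesis using hom_0[OF f] by simp
    next
      case False
      then have "cyc s v = S" using simple_cyc_eq[OF S(1) S(2)] by simp
      then show ?thesis using h S by simp
    qed
  qed
  then have "gen s (\<Union>{N. simple_sub s N}) \<subseteq> {v. f v = 0}" using gen_least[OF ker_sub[OF f]] by blast
  then have "\<forall>v. f v = 0" using ss by (auto simp: semisimple_def)
  then show False using fnz by auto
qed

end

lemma End_facts:
  "carrier (End_ring s) = {f. is_hom s f}" "mult (End_ring s) = (\<circ>)"
  "one (End_ring s) = id" "zero (End_ring s) = (\<lambda>_. 0)"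
  by (simp_all add: End_ring_def)

lemma nilp_End:
  assumes "is_hom s \<phi>" "\<phi> ^^ n = (\<lambda>_. 0)"
  shows "nilpotent_elem (End_ring s) \<phi>"
proof -
  have "\<phi> [^]\<^bsub>End_ring s\<^esub> n = \<zero>\<^bsub>End_ring s\<^esub>" by (simp add: nat_pow_End assms(2) End_facts)
  then show ?thesis unfolding nilpotent_elem_def using assms(1) by (auto simp: End_facts)
qed




context lmod begin

lemma I_to_J:
  assumes ss: "semisimple s" and hom: "is_hom s \<phi>" and nz: "\<phi> \<noteq> (\<lambda>_. 0)"
    and nil: "\<exists>n. \<phi> ^^ n = (\<lambda>_. 0)"
    and ind: "indecomposable_nilpotent (End_ring s) \<phi>"
  shows "\<exists>(k :: unit \<Rightarrow> nat) x. nilpotent_jordan_base s \<phi> UNIV k x"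
proof -
  define m where "m = (LEAST n. \<phi> ^^ n = (\<lambda>_. 0))"
  have nilm: "\<phi> ^^ m = (\<lambda>_. 0)" unfolding m_def using nil by (rule LeastI_ex)
  have m0: "m \<noteq> 0"
  proof
    assume "m = 0"
    then have "\<forall>v. v = (0::'m)" using nilm by (metis funpow_0)
    then show False using nz by (metis)
  qed
  have top: "\<phi> ^^ (m - 1) \<noteq> (\<lambda>_. 0)"
  proof
    assume "\<phi> ^^ (m - 1) = (\<lambda>_. 0)"
    then have "m \<le> m - 1" unfolding m_def by (rule Least_le)
    then show False using m0 by simp
  qed
  obtain x where x: "simple_sub s (cyc s x)" "(\<phi> ^^ (m - 1)) x \<noteq> 0"
    using exists_x[OF ss hom_funpow[OF hom] top] by blast
  let ?y = "(\<phi> ^^ (m - 1)) x"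
  have Ysimp: "simple_sub s (cyc s ?y)" by (rule simple_image[OF hom_funpow[OF hom] x])
  obtain K where K: "submodule s K" "padd K (cyc s ?y) = UNIV" "K \<inter> cyc s ?y = {0}"
    using complement[OF ss x(2) Ysimp] by blast
  obtain lam where lam: "is_hom s lam" "\<forall>v. lam v \<in> cyc s ?y \<and> v - lam v \<in> K"
    and lu: "\<forall>v w. w \<in> cyc s ?y \<longrightarrow> v - w \<in> K \<longrightarrow> lam v = w"
    using projection[OF K(1) cyc_sub K(2,3)] by blast
  have lamfix: "\<forall>w\<in>cyc s ?y. lam w = w" using lu sub0[OF K(1)] by simp
  interpret J: jc s \<phi> x m lam
    using lm hom x nilm lam lamfix by (unfold_locales) auto
  show ?thesis
  proof (cases "J.C = {0}")
    case True
    then show ?thesis using J.case_jordan by blast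
  next
    case False
    then have "decomposable_nilpotent (End_ring s) \<phi>" by (rule J.case_decomposable)
    then show ?thesis using ind by (simp add: indecomposable_nilpotent_def)
  qed
qed

lemma comp_length_series:
  assumes ss: "semisimple s" and fg: "finitely_generated s"
  shows "\<exists>c. comp_in UNIV (comp_length s) c"
proof -
  obtain L where L: "\<forall>S\<in>set L. simple_sub s S" "sumset L = UNIV" using fg_sumset[OF ss fg] by blast
  obtain d c where "comp_in (sumset L) d c" using comp_exists[OF L(1)] by blast
  then have "comp_series s d" using L(2) comp_series_iff by auto
  then have "comp_series s (comp_length s)" unfolding comp_length_def by (rule LeastI)
  then show ?thesis using comp_series_iff by auto
qed

lemma P3_to_I:
  assumes ss: "semisimple s" and hom: "is_hom s \<phi>"
    and nil: "\<exists>n. \<phi> ^^ n = (\<lambda>_. 0)"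
    and fg: "finitely_generated s" and top: "\<phi> ^^ (comp_length s - 1) \<noteq> (\<lambda>_. 0)"
  shows "indecomposable_nilpotent (End_ring s) \<phi>"
proof -
  obtain n where n: "\<phi> ^^ n = (\<lambda>_. 0)" using nil by blast
  have np: "nilpotent_elem (End_ring s) \<phi>" using nilp_End[OF hom n] .
  let ?d = "comp_length s"
  obtain c where c: "comp_in UNIV ?d c" using comp_length_series[OF ss fg] by blast
  obtain v where v: "(\<phi> ^^ (?d - 1)) v \<noteq> 0" using top by auto
  have homd: "is_hom s (\<phi> ^^ (?d - 1))" using hom_funpow[OF hom] .
  have "\<not> decomposable_nilpotent (End_ring s) \<phi>"
  proof
    assume "decomposable_nilpotent (End_ring s) \<phi>"
    then obtain e where e: "is_hom s e" "e \<circ> e = e" "e \<noteq> (\<lambda>_. 0)" "e \<noteq> id" "e \<circ> \<phi> = \<phi> \<circ> e"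
      unfolding decomposable_nilpotent_def by (auto simp: End_facts)
    have ee: "e (e w) = e w" for w using e(2) by (metis comp_apply)
    have ep: "e (\<phi> w) = \<phi> (e w)" for w using e(5) by (metis comp_apply)
    show False
    proof (cases "(\<phi> ^^ (?d - 1)) (e v) = 0")
      case False
      show False
      proof (rule lemma_G[OF c hom n range_hom_sub[OF e(1)]])
        show "\<forall>w\<in>range e. \<phi> w \<in> range e"
        proof
          fix w assume "w \<in> range e"
          then obtain u where "w = e u" by auto
          then show "\<phi> w \<in> range e" using ep[of u] by (metis rangeI)
        qed
        show "range e \<noteq> UNIV"
        proof
          assume "range e = UNIV"
          then have "e w = w" for w using ee by (metis UNIV_I image_iff)
          then show False using e(4) by auto
        qed
        show "e v \<in> range e" by simp
        show "(\<phi> ^^ (?d - 1)) (e v) \<noteq> 0" by (rule False)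
      qed
    next
      case True
      have "(\<phi> ^^ (?d - 1)) (v - e v) = (\<phi> ^^ (?d - 1)) v" using hom_diff[OF homd] True by simp
      then have nz2: "(\<phi> ^^ (?d - 1)) (v - e v) \<noteq> 0" using v by simp
      show False
      proof (rule lemma_G[OF c hom n ker_sub[OF e(1)]])
        show "\<forall>w\<in>{x. e x = 0}. \<phi> w \<in> {x. e x = 0}" using ep hom_0[OF hom] by auto
        show "{x. e x = 0} \<noteq> UNIV" using e(3) by auto
        show "v - e v \<in> {x. e x = 0}" using hom_diff[OF e(1)] ee by simp
        show "(\<phi> ^^ (?d - 1)) (v - e v) \<noteq> 0" by (rule nz2)
      qed
    qed
  qed
  then show ?thesis using np by (simp add: indecomposable_nilpotent_def)
qed

lemma J_to_P3:
  assumes hom: "is_hom s \<phi>" and J: "nilpotent_jordan_base s \<phi> (UNIV :: unit set) k x"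
  shows "finitely_generated s \<and> \<phi> ^^ (comp_length s - 1) \<noteq> (\<lambda>_. 0)"
proof -
  let ?n = "k ()"
  let ?J = "SIGMA \<gamma>:(UNIV::unit set). {1..k \<gamma>}"
  have n1: "1 \<le> ?n" and simp: "\<forall>i\<in>{1..?n}. simple_sub s (cyc s (x () i))"
    and ds: "direct_sum s (\<lambda>(\<gamma>, i). cyc s (x \<gamma> i)) ?J"
    and step: "\<forall>i. 1 \<le> i \<and> i < ?n \<longrightarrow> \<phi> (x () i) = x () (Suc i)"
    using J unfolding nilpotent_jordan_base_def by auto
  have genU: "gen s (\<Union>p\<in>?J. (\<lambda>(\<gamma>, i). cyc s (x \<gamma> i)) p) = UNIV"
    using ds unfolding direct_sum_def by blast
  define L where "L = map (\<lambda>i. cyc s (x () i)) [1..<Suc ?n]"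
  have Ls: "\<forall>S\<in>set L. simple_sub s S" using simp by (auto simp: L_def)
  have Lsub: "\<forall>S\<in>set L. submodule s S" using Ls by (simp add: simple_sub_def)
  have "(\<Union>p\<in>?J. (\<lambda>(\<gamma>, i). cyc s (x \<gamma> i)) p) \<subseteq> sumset L"
  proof
    fix v assume "v \<in> (\<Union>p\<in>?J. (\<lambda>(\<gamma>, i). cyc s (x \<gamma> i)) p)"
    then obtain i where i: "i \<in> {1..?n}" "v \<in> cyc s (x () i)" by auto
    have "i \<in> set [1..<Suc ?n]" using i(1) by auto
    then have "cyc s (x () i) \<in> set L" unfolding L_def set_map by (rule imageI)
    then show "v \<in> sumset L" using sumset_mem[OF Lsub] i(2) by blast
  qed
  then have LU: "sumset L = UNIV" using gen_least[OF sumset_sub[OF Lsub]] genU by blast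
  obtain d c where dc: "d \<le> length L" "comp_in (sumset L) d c" using comp_exists[OF Ls] by blast
  have "comp_series s d" using dc LU comp_series_iff by auto
  then have cl: "comp_length s \<le> ?n" using dc(1) unfolding comp_length_def L_def
    by (metis (no_types, lifting) Least_le diff_Suc_1 le_trans length_map length_upt)
  have fg: "finitely_generated s"
    unfolding finitely_generated_def
  proof (intro exI conjI)
    show "finite (x () ` {1..?n})" by simp
    have "(\<Union>p\<in>?J. (\<lambda>(\<gamma>, i). cyc s (x \<gamma> i)) p) \<subseteq> gen s (x () ` {1..?n})"
    proof
      fix v assume "v \<in> (\<Union>p\<in>?J. (\<lambda>(\<gamma>, i). cyc s (x \<gamma> i)) p)"
      then obtain i where i: "i \<in> {1..?n}" "v \<in> cyc s (x () i)" by auto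
      have "x () i \<in> gen s (x () ` {1..?n})" using i(1) gen_sup by blast
      then have "cyc s (x () i) \<subseteq> gen s (x () ` {1..?n})" using cyc_least[OF gen_sub] by blast
      then show "v \<in> gen s (x () ` {1..?n})" using i(2) by blast
    qed
    then show "gen s (x () ` {1..?n}) = UNIV" using gen_least[OF gen_sub] genU by blast
  qed
  have it: "j < ?n \<longrightarrow> (\<phi> ^^ j) (x () 1) = x () (Suc j)" for j
  proof (induct j)
    case (Suc j)
    show ?case
    proof
      assume "Suc j < ?n"
      then have "(\<phi> ^^ j) (x () 1) = x () (Suc j)" using Suc by simp
      moreover have "\<phi> (x () (Suc j)) = x () (Suc (Suc j))" using step \<open>Suc j < ?n\<close> by simp
      ultimately show "(\<phi> ^^ Suc j) (x () 1) = x () (Suc (Suc j))" by simp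
    qed
  qed simp
  have xn: "x () ?n \<noteq> 0"
  proof
    assume "x () ?n = 0"
    moreover have "simple_sub s (cyc s (x () ?n))" using simp n1 by auto
    ultimately have "simple_sub s (cyc s 0)" by simp
    then show False by (simp add: cyc0 simple_sub_def)
  qed
  have top: "(\<phi> ^^ (?n - 1)) (x () 1) \<noteq> 0" using it[of "?n - 1"] n1 xn by simp
  have "\<phi> ^^ (comp_length s - 1) \<noteq> (\<lambda>_. 0)"
  proof
    assume z: "\<phi> ^^ (comp_length s - 1) = (\<lambda>_. 0)"
    have "?n - 1 = (?n - 1 - (comp_length s - 1)) + (comp_length s - 1)" using cl by simp
    then have "(\<phi> ^^ (?n - 1)) (x () 1) = (\<phi> ^^ (?n - 1 - (comp_length s - 1))) ((\<phi> ^^ (comp_length s - 1)) (x () 1))"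
      by (metis funpow_apply_add)
    also have "\<dots> = 0" using z hom_0[OF hom_funpow[OF hom]] by simp
    finally show False using top by simp
  qed
  then show ?thesis using fg by simp
qed

end


theorem proposition2p3:
  fixes s :: "'r::ring_1 \<Rightarrow> 'm::ab_group_add \<Rightarrow> 'm"
    and \<phi> :: "'m \<Rightarrow> 'm"
  assumes "lmodule s"
    and "semisimple s"
    and "is_hom s \<phi>"
    and "\<phi> \<noteq> (\<lambda>_. 0)"
    and "\<exists>n. (\<phi> ^^ n) = (\<lambda>_. 0)"
  shows "((\<exists>(k :: unit \<Rightarrow> nat) x. nilpotent_jordan_base s \<phi> UNIV k x)
            \<longleftrightarrow> indecomposable_nilpotent (End_ring s) \<phi>)
       \<and> (indecomposable_nilpotent (End_ring s) \<phi>
            \<longleftrightarrow> finitely_generated s \<and> (\<phi> ^^ (comp_length s - 1)) \<noteq> (\<lambda>_. 0))"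
proof -
  interpret lmod s by unfold_locales (rule assms(1))
  have JP: "finitely_generated s \<and> \<phi> ^^ (comp_length s - 1) \<noteq> (\<lambda>_. 0)"
    if "\<exists>(k :: unit \<Rightarrow> nat) x. nilpotent_jordan_base s \<phi> UNIV k x"
    using that J_to_P3[OF assms(3)] by blast
  have PI: "indecomposable_nilpotent (End_ring s) \<phi>"
    if "finitely_generated s \<and> \<phi> ^^ (comp_length s - 1) \<noteq> (\<lambda>_. 0)"
    using that P3_to_I[OF assms(2,3,5)] by blast
  have IJ: "\<exists>(k :: unit \<Rightarrow> nat) x. nilpotent_jordan_base s \<phi> UNIV k x"
    if "indecomposable_nilpotent (End_ring s) \<phi>"
    using I_to_J[OF assms(2,3,4,5) that] .
  show ?thesis using JP PI IJ by blast
qed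

end
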